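(* Let $G^1=(V,A)$ be a directed graph, in which no two arcs join the same pair of vertices (in either direction) and there are no loops, with capacities $c\colon A\to\mathbb{Z}_{>0}$, distinct vertices $s,t$, and an integer $R\ge 0$. Let $G^2$ be the underlying undirected graph of $G^1$, where the edge $uv$ coming from arc $(u,v)$ gets weight $w(uv)=c(u,v)/2$. For each $v\in V$ let $\beta_v$ be the sum of $c(a)$ over all arcs $a$ of $G^1$ directed into $v$, and set $d_v=\beta_v/2$ for $v\notin\{s,t\}$, $d_s=R/2+\beta_s/2$, $d_t=-R/2+\beta_t/2$. Then there is an all-or-nothing $s$-$t$-flow in $G^1$ of value $R$ (a flow $f$ with $f(a)\in\{0,c(a)\}$ for every arc $a$) if and only if there is an orientation of $G^2$ in which, for every vertex $v$, the total weight of the edges directed out of $v$ equals $d_v$.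
   Context: An $s$-$t$-flow in a directed graph with capacities $c$ is a function $f\colon A\to\mathbb{Z}_{\ge0}$ with $0\le f(a)\le c(a)$ for all arcs and flow conservation (inflow equals outflow) at every vertex other than $s,t$; its value is the outflow of $s$ minus the inflow of $s$. An orientation of an undirected graph chooses a direction for each edge. *)

theory Defs
  imports Complex_Main
begin

definition simple_digraph :: "'a set \<Rightarrow> ('a \<times> 'a) set \<Rightarrow> bool" where
  "simple_digraph V A \<longleftrightarrow> A \<subseteq> V \<times> V \<and> (\<forall>(u,v)\<in>A. u \<noteq> v \<and> (v,u) \<notin> A)"

definition in_arcs :: "('a \<times> 'a) set \<Rightarrow> 'a \<Rightarrow> ('a \<times> 'a) set" where
  "in_arcs A v = {a \<in> A. snd a = v}"

definition out_arcs :: "('a \<times> 'a) set \<Rightarrow> 'a \<Rightarrow> ('a \<times> 'a) set" where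
  "out_arcs A v = {a \<in> A. fst a = v}"

definition is_st_flow ::
  "'a set \<Rightarrow> ('a \<times> 'a) set \<Rightarrow> ('a \<times> 'a \<Rightarrow> int) \<Rightarrow> 'a \<Rightarrow> 'a \<Rightarrow> ('a \<times> 'a \<Rightarrow> int) \<Rightarrow> bool" where
  "is_st_flow V A c s t f \<longleftrightarrow>
     (\<forall>a\<in>A. 0 \<le> f a \<and> f a \<le> c a) \<and>
     (\<forall>v\<in>V - {s, t}. (\<Sum>a\<in>in_arcs A v. f a) = (\<Sum>a\<in>out_arcs A v. f a))"

definition flow_value :: "('a \<times> 'a) set \<Rightarrow> 'a \<Rightarrow> ('a \<times> 'a \<Rightarrow> int) \<Rightarrow> int" where
  "flow_value A s f = (\<Sum>a\<in>out_arcs A s. f a) - (\<Sum>a\<in>in_arcs A s. f a)"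

definition all_or_nothing :: "('a \<times> 'a) set \<Rightarrow> ('a \<times> 'a \<Rightarrow> int) \<Rightarrow> ('a \<times> 'a \<Rightarrow> int) \<Rightarrow> bool" where
  "all_or_nothing A c f \<longleftrightarrow> (\<forall>a\<in>A. f a = 0 \<or> f a = c a)"

definition underlying_edges :: "('a \<times> 'a) set \<Rightarrow> 'a set set" where
  "underlying_edges A = {{u, v} | u v. (u, v) \<in> A}"

definition und_weight :: "('a \<times> 'a) set \<Rightarrow> ('a \<times> 'a \<Rightarrow> int) \<Rightarrow> 'a set \<Rightarrow> real" where
  "und_weight A c e = real_of_int (c (SOME a. a \<in> A \<and> {fst a, snd a} = e)) / 2"

definition is_orientation :: "'a set set \<Rightarrow> ('a \<times> 'a) set \<Rightarrow> bool" where
  "is_orientation E Or \<longleftrightarrow>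
     (\<forall>(u,v)\<in>Or. {u, v} \<in> E) \<and> (\<forall>e\<in>E. \<exists>!p. p \<in> Or \<and> {fst p, snd p} = e)"

definition out_weight :: "('a \<times> 'a) set \<Rightarrow> ('a set \<Rightarrow> real) \<Rightarrow> 'a \<Rightarrow> real" where
  "out_weight Or w v = (\<Sum>p\<in>{p \<in> Or. fst p = v}. w {fst p, snd p})"

definition beta :: "('a \<times> 'a) set \<Rightarrow> ('a \<times> 'a \<Rightarrow> int) \<Rightarrow> 'a \<Rightarrow> int" where
  "beta A c v = (\<Sum>a\<in>in_arcs A v. c a)"

definition demand :: "('a \<times> 'a) set \<Rightarrow> ('a \<times> 'a \<Rightarrow> int) \<Rightarrow> 'a \<Rightarrow> 'a \<Rightarrow> int \<Rightarrow> 'a \<Rightarrow> real" where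
  "demand A c s t R v =
     (if v = s then real_of_int R / 2 + real_of_int (beta A c v) / 2
      else if v = t then - real_of_int R / 2 + real_of_int (beta A c v) / 2
      else real_of_int (beta A c v) / 2)"

end

theory Submission
  imports Defs
begin

lemma uw:
  assumes "simple_digraph V A" "a \<in> A"
  shows "und_weight A c {fst a, snd a} = real_of_int (c a) / 2"
proof -
  obtain u v where a: "a = (u,v)" by (cases a)
  have nv: "(v,u) \<notin> A" using assms a unfolding simple_digraph_def by auto
  have "(SOME b. b \<in> A \<and> {fst b, snd b} = {u,v}) = (u,v)"
  proof (rule some_equality)
    show "(u,v) \<in> A \<and> {fst (u,v), snd (u,v)} = {u,v}" using assms a by auto
  next
    fix b assume "b \<in> A \<and> {fst b, snd b} = {u, v}"
    then show "b = (u,v)" using nv by (cases b) (auto simp: doubleton_eq_iff)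
  qed
  then show ?thesis using a unfolding und_weight_def by simp
qed

lemma ow:
  assumes sd: "simple_digraph V A" and fin: "finite A"
    and sub: "Or \<subseteq> A \<union> prod.swap ` A" and ex: "\<forall>a\<in>A. a \<in> Or \<longleftrightarrow> prod.swap a \<notin> Or"
  shows "out_weight Or (und_weight A c) v =
     (real_of_int (\<Sum>a\<in>{a\<in>out_arcs A v. a\<in>Or}. c a) + real_of_int (\<Sum>a\<in>{a\<in>in_arcs A v. a\<notin>Or}. c a)) / 2"
proof -
  have disjA: "\<And>a. a \<in> A \<Longrightarrow> prod.swap a \<notin> A" using sd unfolding simple_digraph_def by auto
  have set: "{p\<in>Or. fst p = v} = {a\<in>out_arcs A v. a\<in>Or} \<union> prod.swap ` {a\<in>in_arcs A v. a\<notin>Or}"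
  proof (rule set_eqI, rule iffI)
    fix p assume p: "p \<in> {p\<in>Or. fst p = v}"
    show "p \<in> {a\<in>out_arcs A v. a\<in>Or} \<union> prod.swap ` {a\<in>in_arcs A v. a\<notin>Or}"
    proof (cases "p \<in> A")
      case True then show ?thesis using p unfolding out_arcs_def by auto
    next
      case False
      then have sA: "prod.swap p \<in> A" using sub p by auto
      then have "prod.swap p \<in> Or \<longleftrightarrow> prod.swap (prod.swap p) \<notin> Or" using ex by blast
      then have "prod.swap p \<notin> Or" using p by simp
      then have "prod.swap p \<in> {a\<in>in_arcs A v. a\<notin>Or}" using sA p
        unfolding in_arcs_def by (cases p) simp
      then have "prod.swap (prod.swap p) \<in> prod.swap ` {a\<in>in_arcs A v. a\<notin>Or}" by (rule imageI)
      then show ?thesis by simp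
    qed
  next
    fix p assume "p \<in> {a\<in>out_arcs A v. a\<in>Or} \<union> prod.swap ` {a\<in>in_arcs A v. a\<notin>Or}"
    then show "p \<in> {p\<in>Or. fst p = v}" 
    proof
      assume "p \<in> {a\<in>out_arcs A v. a\<in>Or}" then show ?thesis unfolding out_arcs_def by simp
    next
      assume "p \<in> prod.swap ` {a\<in>in_arcs A v. a\<notin>Or}"
      then obtain a where "a \<in> A" "snd a = v" "a \<notin> Or" "p = prod.swap a" unfolding in_arcs_def by auto
      then have "prod.swap a \<in> Or" using ex by blast
      then show ?thesis using \<open>snd a = v\<close> \<open>p = prod.swap a\<close> by (cases a) simp
    qed
  qed
  have fo: "finite {a\<in>out_arcs A v. a\<in>Or}" using fin unfolding out_arcs_def by auto
  have fi: "finite {a\<in>in_arcs A v. a\<notin>Or}" using fin unfolding in_arcs_def by auto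
  have dj: "{a\<in>out_arcs A v. a\<in>Or} \<inter> prod.swap ` {a\<in>in_arcs A v. a\<notin>Or} = {}"
  proof (rule ccontr)
    assume "\<not> ?thesis"
    then obtain a where "a \<in> A" "prod.swap a \<in> A" unfolding out_arcs_def in_arcs_def by auto
    then show False using disjA by blast
  qed
  have "out_weight Or (und_weight A c) v =
     (\<Sum>p\<in>{a\<in>out_arcs A v. a\<in>Or}. und_weight A c {fst p, snd p}) +
     (\<Sum>p\<in>prod.swap ` {a\<in>in_arcs A v. a\<notin>Or}. und_weight A c {fst p, snd p})"
    unfolding out_weight_def set using fo fi dj by (simp add: sum.union_disjoint)
  also have "(\<Sum>p\<in>prod.swap ` {a\<in>in_arcs A v. a\<notin>Or}. und_weight A c {fst p, snd p})
      = (\<Sum>p\<in>{a\<in>in_arcs A v. a\<notin>Or}. und_weight A c {snd p, fst p})"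
    by (subst sum.reindex) (auto intro: inj_onI)
  also have "\<dots> = (\<Sum>p\<in>{a\<in>in_arcs A v. a\<notin>Or}. real_of_int (c p) / 2)"
  proof (rule sum.cong)
    fix p assume "p \<in> {a\<in>in_arcs A v. a\<notin>Or}"
    then have pA: "p \<in> A" unfolding in_arcs_def by simp
    have "{snd p, fst p} = {fst p, snd p}" by (rule insert_commute)
    then show "und_weight A c {snd p, fst p} = real_of_int (c p) / 2" using uw[OF sd pA] by simp
  qed simp
  also have "(\<Sum>p\<in>{a\<in>out_arcs A v. a\<in>Or}. und_weight A c {fst p, snd p})
      = (\<Sum>p\<in>{a\<in>out_arcs A v. a\<in>Or}. real_of_int (c p) / 2)"
  proof (rule sum.cong)
    fix p assume "p \<in> {a\<in>out_arcs A v. a\<in>Or}"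
    then have pA: "p \<in> A" unfolding out_arcs_def by simp
    then show "und_weight A c {fst p, snd p} = real_of_int (c p) / 2" using uw[OF sd pA] by simp
  qed simp
  finally show ?thesis by (simp add: sum_divide_distrib[symmetric] add_divide_distrib)
qed


lemma split_sum:
  fixes g :: "'b \<Rightarrow> int"
  assumes "finite S"
  shows "sum g S = sum g {x\<in>S. P x} + sum g {x\<in>S. \<not> P x}"
proof -
  have "sum g S = (\<Sum>x\<in>S. (if P x then g x else 0) + (if \<not> P x then g x else 0))"
    by (rule sum.cong) auto
  also have "\<dots> = sum g {x\<in>S. P x} + sum g {x\<in>S. \<not> P x}"
    using assms by (simp add: sum.distrib sum.inter_filter)
  finally show ?thesis .
qed

lemma ow2:
  assumes sd: "simple_digraph V A" and fin: "finite A"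
    and sub: "Or \<subseteq> A \<union> prod.swap ` A" and ex: "\<forall>a\<in>A. a \<in> Or \<longleftrightarrow> prod.swap a \<notin> Or"
  shows "out_weight Or (und_weight A c) v =
     (real_of_int (\<Sum>a\<in>out_arcs A v. if a \<in> Or then c a else 0) + real_of_int (beta A c v)
      - real_of_int (\<Sum>a\<in>in_arcs A v. if a \<in> Or then c a else 0)) / 2"
proof -
  have fo: "finite (out_arcs A v)" "finite (in_arcs A v)" using fin unfolding out_arcs_def in_arcs_def by auto
  have 1: "(\<Sum>a\<in>out_arcs A v. if a \<in> Or then c a else 0) = (\<Sum>a\<in>{a\<in>out_arcs A v. a\<in>Or}. c a)"
    using fo by (simp add: sum.inter_filter)
  have 2: "(\<Sum>a\<in>in_arcs A v. if a \<in> Or then c a else 0) = (\<Sum>a\<in>{a\<in>in_arcs A v. a\<in>Or}. c a)"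
    using fo by (simp add: sum.inter_filter)
  have 3: "beta A c v = (\<Sum>a\<in>{a\<in>in_arcs A v. a\<in>Or}. c a) + (\<Sum>a\<in>{a\<in>in_arcs A v. a\<notin>Or}. c a)"
    unfolding beta_def using fo(2) by (rule split_sum)
  show ?thesis unfolding ow[OF sd fin sub ex] 1 2 3 by simp
qed

lemma orient_iff:
  assumes sd: "simple_digraph V A"
  shows "is_orientation (underlying_edges A) Or \<longleftrightarrow>
     (Or \<subseteq> A \<union> prod.swap ` A \<and> (\<forall>a\<in>A. a \<in> Or \<longleftrightarrow> prod.swap a \<notin> Or))"
proof
  assume o: "is_orientation (underlying_edges A) Or"
  have o1: "\<forall>(u,v)\<in>Or. {u, v} \<in> underlying_edges A"
   and o2: "\<forall>e\<in>underlying_edges A. \<exists>!p. p \<in> Or \<and> {fst p, snd p} = e"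
    using o[unfolded is_orientation_def] by (rule conjunct1, rule conjunct2)
  have "Or \<subseteq> A \<union> prod.swap ` A"
  proof
    fix p assume "p \<in> Or"
    then have "{fst p, snd p} \<in> underlying_edges A" using o1
      by (cases p) auto
    then obtain u v where uv: "(u,v) \<in> A" "{fst p, snd p} = {u,v}" unfolding underlying_edges_def by auto
    then have "p = (u,v) \<or> p = (v,u)" by (cases p) (auto simp: doubleton_eq_iff)
    then show "p \<in> A \<union> prod.swap ` A" using uv(1) by (auto intro: image_eqI[where x="(u,v)"])
  qed
  moreover have "\<forall>a\<in>A. a \<in> Or \<longleftrightarrow> prod.swap a \<notin> Or"
  proof
    fix a assume aA: "a \<in> A"
    obtain u v where a: "a = (u,v)" by (cases a)
    have uv: "u \<noteq> v" using sd aA unfolding simple_digraph_def a by blast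
    have "{u,v} \<in> underlying_edges A" using aA unfolding a underlying_edges_def by blast
    then have eu: "\<exists>!p. p \<in> Or \<and> {fst p, snd p} = {u,v}" by (rule bspec[OF o2])
    then obtain p where p: "p \<in> Or" "{fst p, snd p} = {u,v}" by (elim ex1E) blast
    then have "p = (u,v) \<or> p = (v,u)" by (cases p) (auto simp: doubleton_eq_iff)
    then have one: "(u,v) \<in> Or \<or> (v,u) \<in> Or" using p by auto
    have "\<not> ((u,v) \<in> Or \<and> (v,u) \<in> Or)"
    proof
      assume "(u,v) \<in> Or \<and> (v,u) \<in> Or"
      moreover have "{v,u} = {u,v}" by (rule insert_commute)
      ultimately have P1: "(u,v) \<in> Or \<and> {fst (u,v), snd (u,v)} = {u,v}"
        and P2: "(v,u) \<in> Or \<and> {fst (v,u), snd (v,u)} = {u,v}" by simp_all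
      from eu obtain q where q: "\<And>p. p \<in> Or \<and> {fst p, snd p} = {u,v} \<Longrightarrow> p = q" by (elim ex1E) blast
      have "(u,v) = q" by (rule q[OF P1])
      moreover have "(v,u) = q" by (rule q[OF P2])
      ultimately have "(u,v) = (v,u)" by simp
      then show False using uv by simp
    qed
    then show "a \<in> Or \<longleftrightarrow> prod.swap a \<notin> Or" unfolding a using one by auto
  qed
  ultimately show "Or \<subseteq> A \<union> prod.swap ` A \<and> (\<forall>a\<in>A. a \<in> Or \<longleftrightarrow> prod.swap a \<notin> Or)" by blast
next
  assume h: "Or \<subseteq> A \<union> prod.swap ` A \<and> (\<forall>a\<in>A. a \<in> Or \<longleftrightarrow> prod.swap a \<notin> Or)"
  show "is_orientation (underlying_edges A) Or"
    unfolding is_orientation_def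
  proof (intro conjI ballI)
    fix x assume "x \<in> Or"
    then have "x \<in> A \<or> prod.swap x \<in> A" using h[THEN conjunct1] by auto
    then show "case x of (u, v) \<Rightarrow> {u, v} \<in> underlying_edges A"
      unfolding underlying_edges_def by (cases x) (auto simp: insert_commute)
  next
    fix e assume "e \<in> underlying_edges A"
    then obtain u v where uv: "(u,v) \<in> A" "e = {u,v}" unfolding underlying_edges_def by auto
    have iff: "(u,v) \<in> Or \<longleftrightarrow> (v,u) \<notin> Or" using bspec[OF h[THEN conjunct2] uv(1)] by simp
    have cand: "\<And>p. {fst p, snd p} = {u,v} \<Longrightarrow> p = (u,v) \<or> p = (v,u)"
      by (case_tac p) (auto simp: doubleton_eq_iff)
    show "\<exists>!p. p \<in> Or \<and> {fst p, snd p} = e"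
    proof (cases "(u,v) \<in> Or")
      case True
      show ?thesis
      proof (rule ex1I[where a="(u,v)"])
        show "(u,v) \<in> Or \<and> {fst (u,v), snd (u,v)} = e" using True uv by simp
      next
        fix p assume "p \<in> Or \<and> {fst p, snd p} = e"
        then show "p = (u,v)" using cand[of p] uv iff True by auto
      qed
    next
      case False
      show ?thesis
      proof (rule ex1I[where a="(v,u)"])
        show "(v,u) \<in> Or \<and> {fst (v,u), snd (v,u)} = e" using False iff uv by (auto simp: insert_commute)
      next
        fix p assume "p \<in> Or \<and> {fst p, snd p} = e"
        then show "p = (v,u)" using cand[of p] uv iff False by auto
      qed
    qed
  qed
qed


lemma total:
  fixes f :: "'a \<times> 'a \<Rightarrow> int"
  assumes fV: "finite V" and AV: "A \<subseteq> V \<times> V"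
  shows "(\<Sum>v\<in>V. \<Sum>a\<in>out_arcs A v. f a) = (\<Sum>v\<in>V. \<Sum>a\<in>in_arcs A v. f a)"
proof -
  have fA: "finite A" using fV AV finite_subset by blast
  have "(\<Sum>v\<in>V. \<Sum>a\<in>out_arcs A v. f a) = sum f A"
    unfolding out_arcs_def using sum.group[OF fA fV, of fst f] AV by fastforce
  moreover have "(\<Sum>v\<in>V. \<Sum>a\<in>in_arcs A v. f a) = sum f A"
    unfolding in_arcs_def using sum.group[OF fA fV, of snd f] AV by fastforce
  ultimately show ?thesis by simp
qed

lemma real_half_eq:
  fixes x y b R :: int
  assumes "(real_of_int x + real_of_int b - real_of_int y) / 2 = real_of_int R / 2 + real_of_int b / 2"
  shows "x - y = R"
proof -
  have "real_of_int (x - y) = real_of_int R" using assms by simp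
  then show ?thesis by (simp only: of_int_eq_iff)
qed

theorem mainTheorem2:
  fixes V :: "'a set" and A :: "('a \<times> 'a) set" and c :: "'a \<times> 'a \<Rightarrow> int"
    and s t :: 'a and R :: int
  assumes "finite V" and "simple_digraph V A"
    and "\<forall>a\<in>A. c a > 0"
    and "s \<in> V" and "t \<in> V" and "s \<noteq> t" and "R \<ge> 0"
  shows "(\<exists>f. is_st_flow V A c s t f \<and> all_or_nothing A c f \<and> flow_value A s f = R)
     \<longleftrightarrow> (\<exists>Or. is_orientation (underlying_edges A) Or \<and>
               (\<forall>v\<in>V. out_weight Or (und_weight A c) v = demand A c s t R v))"
proof -
  note fV = assms(1) and sd = assms(2) and cpos = assms(3) and sV = assms(4) and tV = assms(5)
    and st = assms(6)
  have AV: "A \<subseteq> V \<times> V" using sd unfolding simple_digraph_def by blast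
  have fA: "finite A" using fV AV finite_subset by blast
  have disjA: "\<And>a. a \<in> A \<Longrightarrow> prod.swap a \<notin> A" using sd unfolding simple_digraph_def by auto
  have outA: "\<And>v. out_arcs A v \<subseteq> A" "\<And>v. in_arcs A v \<subseteq> A" unfolding out_arcs_def in_arcs_def by auto
  show ?thesis
  proof
    assume "\<exists>f. is_st_flow V A c s t f \<and> all_or_nothing A c f \<and> flow_value A s f = R"
    then obtain f where fl: "is_st_flow V A c s t f" and aon: "all_or_nothing A c f"
      and fv: "flow_value A s f = R" by blast
    define Or where "Or = {a\<in>A. f a = c a} \<union> prod.swap ` {a\<in>A. f a \<noteq> c a}"
    have sub: "Or \<subseteq> A \<union> prod.swap ` A" unfolding Or_def by auto
    have memOr: "\<And>a. a \<in> A \<Longrightarrow> a \<in> Or \<longleftrightarrow> f a = c a"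
    proof -
      fix a assume aA: "a \<in> A"
      have "a \<notin> prod.swap ` A"
      proof
        assume "a \<in> prod.swap ` A"
        then obtain b where "b \<in> A" "a = prod.swap b" by blast
        then show False using disjA[OF aA] by simp
      qed
      then show "a \<in> Or \<longleftrightarrow> f a = c a" unfolding Or_def using aA by blast
    qed
    have memOr2: "\<And>a. a \<in> A \<Longrightarrow> prod.swap a \<in> Or \<longleftrightarrow> f a \<noteq> c a"
    proof -
      fix a assume aA: "a \<in> A"
      have "prod.swap a \<notin> A" using disjA[OF aA] .
      moreover have "prod.swap a \<in> prod.swap ` {a\<in>A. f a \<noteq> c a} \<longleftrightarrow> a \<in> {a\<in>A. f a \<noteq> c a}"
        by (rule inj_image_mem_iff) (auto intro: injI)
      ultimately show "prod.swap a \<in> Or \<longleftrightarrow> f a \<noteq> c a" unfolding Or_def using aA by blast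
    qed
    have ex: "\<forall>a\<in>A. a \<in> Or \<longleftrightarrow> prod.swap a \<notin> Or"
      using memOr memOr2 by blast
    have fg: "\<And>a. a \<in> A \<Longrightarrow> f a = (if a \<in> Or then c a else 0)"
      using memOr aon unfolding all_or_nothing_def by auto
    have Oeq: "\<And>v. (\<Sum>a\<in>out_arcs A v. if a \<in> Or then c a else 0) = (\<Sum>a\<in>out_arcs A v. f a)"
    proof (rule sum.cong)
      fix v a assume "a \<in> out_arcs A v"
      then have "a \<in> A" using outA by blast
      then show "(if a \<in> Or then c a else 0) = f a" using fg by simp
    qed simp
    have Ieq: "\<And>v. (\<Sum>a\<in>in_arcs A v. if a \<in> Or then c a else 0) = (\<Sum>a\<in>in_arcs A v. f a)"
    proof (rule sum.cong)
      fix v a assume "a \<in> in_arcs A v"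
      then have "a \<in> A" using outA by blast
      then show "(if a \<in> Or then c a else 0) = f a" using fg by simp
    qed simp
    define D where "D v = (\<Sum>a\<in>out_arcs A v. f a) - (\<Sum>a\<in>in_arcs A v. f a)" for v
    have Dz: "\<And>v. v \<in> V - {s,t} \<Longrightarrow> D v = 0" using fl unfolding is_st_flow_def D_def by auto
    have Ds: "D s = R" using fv unfolding D_def flow_value_def by simp
    have Dsum: "(\<Sum>v\<in>V. D v) = 0" unfolding D_def sum_subtractf using total[OF fV AV] by simp
    have "(\<Sum>v\<in>V. D v) = D s + (\<Sum>v\<in>V - {s}. D v)" using fV sV by (simp add: sum.remove)
    also have "(\<Sum>v\<in>V - {s}. D v) = D t + (\<Sum>v\<in>V - {s} - {t}. D v)"
      using fV tV st by (simp add: sum.remove)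
    also have "(\<Sum>v\<in>V - {s} - {t}. D v) = 0" using Dz by (intro sum.neutral) auto
    finally have Dt: "D t = - R" using Dsum Ds by simp
    show "\<exists>Or. is_orientation (underlying_edges A) Or \<and>
               (\<forall>v\<in>V. out_weight Or (und_weight A c) v = demand A c s t R v)"
    proof (intro exI conjI ballI)
      show "is_orientation (underlying_edges A) Or" using orient_iff[OF sd] sub ex by blast
    next
      fix v assume vV: "v \<in> V"
      have "out_weight Or (und_weight A c) v =
        (real_of_int (\<Sum>a\<in>out_arcs A v. f a) + real_of_int (beta A c v) - real_of_int (\<Sum>a\<in>in_arcs A v. f a)) / 2"
        unfolding ow2[OF sd fA sub ex] Oeq Ieq ..
      also have "\<dots> = (real_of_int (D v) + real_of_int (beta A c v)) / 2" unfolding D_def by simp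
      also have "\<dots> = demand A c s t R v"
        using Ds Dt Dz[of v] vV unfolding demand_def by (auto simp: field_simps)
      finally show "out_weight Or (und_weight A c) v = demand A c s t R v" .
    qed
  next
    assume "\<exists>Or. is_orientation (underlying_edges A) Or \<and>
               (\<forall>v\<in>V. out_weight Or (und_weight A c) v = demand A c s t R v)"
    then obtain Or where o: "is_orientation (underlying_edges A) Or"
      and dm: "\<forall>v\<in>V. out_weight Or (und_weight A c) v = demand A c s t R v" by blast
    have sub: "Or \<subseteq> A \<union> prod.swap ` A" and ex: "\<forall>a\<in>A. a \<in> Or \<longleftrightarrow> prod.swap a \<notin> Or"
      using o orient_iff[OF sd] by blast+
    define f where "f a = (if a \<in> Or then c a else 0)" for a
    have key: "\<And>v. v \<in> V \<Longrightarrow> (real_of_int (\<Sum>a\<in>out_arcs A v. f a) + real_of_int (beta A c v)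
      - real_of_int (\<Sum>a\<in>in_arcs A v. f a)) / 2 = demand A c s t R v"
      using dm ow2[OF sd fA sub ex] unfolding f_def by metis
    show "\<exists>f. is_st_flow V A c s t f \<and> all_or_nothing A c f \<and> flow_value A s f = R"
    proof (intro exI conjI)
      show "is_st_flow V A c s t f" unfolding is_st_flow_def
      proof (intro conjI ballI)
        fix a assume "a \<in> A" then show "0 \<le> f a" "f a \<le> c a" using cpos unfolding f_def by auto
      next
        fix v assume v: "v \<in> V - {s,t}"
        have "(\<Sum>a\<in>out_arcs A v. f a) - (\<Sum>a\<in>in_arcs A v. f a) = 0"
          by (rule real_half_eq) (use key[of v] v in \<open>simp add: demand_def\<close>)
        then show "(\<Sum>a\<in>in_arcs A v. f a) = (\<Sum>a\<in>out_arcs A v. f a)" by simp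
      qed
    next
      show "all_or_nothing A c f" unfolding all_or_nothing_def f_def by auto
    next
      show "flow_value A s f = R" unfolding flow_value_def
        by (rule real_half_eq) (use key[OF sV] in \<open>simp add: demand_def\<close>)
    qed
  qed
qed

end
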